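(* Let $G\le\mathrm{O}(d)$ be finite and let $z_1,\ldots,z_n\in\mathbb{R}^d$. Then the max filter bank $\Phi:\mathbb{R}^d/G\to\mathbb{R}^n$, $\Phi([x])=(\langle\!\langle[z_i],[x]\rangle\!\rangle)_{i=1}^n$, satisfies $$\sup_{\substack{[x],[y]\in\mathbb{R}^d/G\\ [x]\ne[y]}}\frac{\|\Phi([x])-\Phi([y])\|}{d([x],[y])}=\max\Big\{\big\|[\,g_1z_1\ \cdots\ g_nz_n\,]\big\|_{2\to2}\;:\;g_1,\ldots,g_n\in G,\ \textstyle\bigcap_{i=1}^n V_{g_iz_i}\ne\varnothing\Big\},$$ where $[\,g_1z_1\ \cdots\ g_nz_n\,]$ is the $d\times n$ matrix with columns $g_iz_i$.
   Context: For $x\in\mathbb{R}^d$, $[x]:=\{gx:g\in G\}$; $\mathbb{R}^d/G$ is the set of orbits with quotient metric $d([x],[y]):=\min_{p\in[x],q\in[y]}\|p-q\|$. Max filtering: $\langle\!\langle[x],[y]\rangle\!\rangle:=\max_{p\in[x],q\in[y]}\langle p,q\rangle$. The open Voronoi cell $V_x$ of $x$ is the set of $y\in\mathbb{R}^d$ such that $x$ is the unique maximizer of $\langle p,y\rangle$ over $p\in[x]$. $\|A\|_{2\to2}$ denotes the operator (spectral) norm. *)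

theory Defs
  imports "HOL-Analysis.Analysis"
begin

definition finite_orth_group :: "(real^'d^'d) set \<Rightarrow> bool" where
  "finite_orth_group G \<longleftrightarrow> finite G \<and> mat 1 \<in> G \<and>
     (\<forall>g\<in>G. orthogonal_matrix g) \<and>
     (\<forall>g\<in>G. \<forall>h\<in>G. g ** h \<in> G) \<and> (\<forall>g\<in>G. matrix_inv g \<in> G)"

definition orbit :: "(real^'d^'d) set \<Rightarrow> real^'d \<Rightarrow> (real^'d) set" where
  "orbit G x = (\<lambda>g. g *v x) ` G"

definition qdist :: "(real^'d^'d) set \<Rightarrow> real^'d \<Rightarrow> real^'d \<Rightarrow> real" where
  "qdist G x y = Min {dist p q | p q. p \<in> orbit G x \<and> q \<in> orbit G y}"

definition maxfilt :: "(real^'d^'d) set \<Rightarrow> real^'d \<Rightarrow> real^'d \<Rightarrow> real" where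
  "maxfilt G x y = Max {p \<bullet> q | p q. p \<in> orbit G x \<and> q \<in> orbit G y}"

definition voronoi :: "(real^'d^'d) set \<Rightarrow> real^'d \<Rightarrow> (real^'d) set" where
  "voronoi G x = {y. \<forall>p\<in>orbit G x. p \<noteq> x \<longrightarrow> p \<bullet> y < x \<bullet> y}"

definition maxfilter_bank :: "(real^'d^'d) set \<Rightarrow> ('n \<Rightarrow> real^'d) \<Rightarrow> real^'d \<Rightarrow> real^'n" where
  "maxfilter_bank G z x = (\<chi> i. maxfilt G (z i) x)"

definition col_matrix :: "('n \<Rightarrow> real^'d) \<Rightarrow> real^'n^'d" where
  "col_matrix c = (\<chi> r j. c j $ r)"

end

theory Submission
  imports Defs
begin

lemma fog_facts:
  assumes "finite_orth_group G"
  shows "finite G" "mat 1 \<in> G" "\<And>g. g \<in> G \<Longrightarrow> orthogonal_matrix g"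
    "\<And>g h. g \<in> G \<Longrightarrow> h \<in> G \<Longrightarrow> g ** h \<in> G" "\<And>g. g \<in> G \<Longrightarrow> matrix_inv g \<in> G"
  using assms unfolding finite_orth_group_def by auto

lemma orth_inv:
  fixes k :: "real^'d^'d"
  assumes "orthogonal_matrix k"
  shows "k ** matrix_inv k = mat 1" "matrix_inv k ** k = mat 1"
proof -
  have "\<exists>A'. k ** A' = mat 1 \<and> A' ** k = mat 1"
    using assms unfolding orthogonal_matrix_def by blast
  then have "k ** matrix_inv k = mat 1 \<and> matrix_inv k ** k = mat 1"
    unfolding matrix_inv_def by (rule someI_ex)
  then show "k ** matrix_inv k = mat 1" "matrix_inv k ** k = mat 1" by auto
qed

lemma mv_inner: "((A::real^'n^'m) *v a) \<bullet> b = a \<bullet> (transpose A *v b)"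
  by (metis dot_lmul_matrix vector_transpose_matrix)

lemma orth_norm:
  fixes k :: "real^'d^'d"
  assumes "orthogonal_matrix k"
  shows "norm (k *v w) = norm w"
proof -
  have "(k *v w) \<bullet> (k *v w) = w \<bullet> w"
    using assms by (simp add: mv_inner matrix_vector_mul_assoc orthogonal_matrix_def)
  then show ?thesis by (simp add: norm_eq_sqrt_inner)
qed

lemma orbit_mult:
  assumes "finite_orth_group G" "k \<in> G"
  shows "orbit G (k *v x) = orbit G x"
proof
  show "orbit G (k *v x) \<subseteq> orbit G x"
    using fog_facts[OF assms(1)] assms(2)
    by (auto simp: orbit_def matrix_vector_mul_assoc)
  show "orbit G x \<subseteq> orbit G (k *v x)"
  proof
    fix p assume "p \<in> orbit G x"
    then obtain h where h: "h \<in> G" "p = h *v x" by (auto simp: orbit_def)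
    have "p = (h ** matrix_inv k) *v (k *v x)"
      using h orth_inv[OF fog_facts(3)[OF assms]]
      by (simp add: matrix_vector_mul_assoc matrix_mul_assoc[symmetric])
    moreover have "h ** matrix_inv k \<in> G" using fog_facts[OF assms(1)] assms h by auto
    ultimately show "p \<in> orbit G (k *v x)" by (auto simp: orbit_def)
  qed
qed

lemma orbit_self: "finite_orth_group G \<Longrightarrow> x \<in> orbit G x"
  using fog_facts(2)[of G] by (force simp: orbit_def)

lemma orbit_finite: "finite_orth_group G \<Longrightarrow> finite (orbit G x)"
  using fog_facts(1)[of G] by (simp add: orbit_def)

lemma maxfilt_alt:
  assumes "finite_orth_group G"
  shows "maxfilt G z x = Max ((\<lambda>p. p \<bullet> x) ` orbit G z)"
proof -
  have "{p \<bullet> q | p q. p \<in> orbit G z \<and> q \<in> orbit G x} = (\<lambda>p. p \<bullet> x) ` orbit G z"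
  proof
    show "(\<lambda>p. p \<bullet> x) ` orbit G z \<subseteq> {p \<bullet> q | p q. p \<in> orbit G z \<and> q \<in> orbit G x}"
      using orbit_self[OF assms] by blast
    show "{p \<bullet> q | p q. p \<in> orbit G z \<and> q \<in> orbit G x} \<subseteq> (\<lambda>p. p \<bullet> x) ` orbit G z"
    proof clarify
      fix p q assume "p \<in> orbit G z" "q \<in> orbit G x"
      then obtain a b where ab: "a \<in> G" "b \<in> G" "p = a *v z" "q = b *v x" by (auto simp: orbit_def)
      have "p \<bullet> q = (transpose b *v p) \<bullet> x"
        by (metis ab(4) mv_inner inner_commute)
      moreover have "transpose b *v p \<in> orbit G z"
      proof -
        have "transpose b = matrix_inv b"
        proof -
          have "transpose b = transpose b ** (b ** matrix_inv b)"
            using orth_inv[OF fog_facts(3)[OF assms ab(2)]] by simp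
          also have "\<dots> = (transpose b ** b) ** matrix_inv b"
            by (simp add: matrix_mul_assoc)
          also have "\<dots> = matrix_inv b"
            using fog_facts(3)[OF assms ab(2)] by (simp add: orthogonal_matrix_def)
          finally show ?thesis .
        qed
        then show ?thesis using ab fog_facts[OF assms]
          by (auto simp: orbit_def image_iff matrix_vector_mul_assoc intro!: bexI[of _ "matrix_inv b ** a"])
      qed
      ultimately show "p \<bullet> q \<in> (\<lambda>p. p \<bullet> x) ` orbit G z" by blast
    qed
  qed
  then show ?thesis unfolding maxfilt_def by simp
qed

lemma maxfilt_lip:
  assumes G: "finite_orth_group G"
  shows "maxfilt G z x - maxfilt G z y \<le> norm z * norm (x - y)"
proof -
  have fin: "finite ((\<lambda>p. p \<bullet> x) ` orbit G z)" "finite ((\<lambda>p. p \<bullet> y) ` orbit G z)"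
    using orbit_finite[OF G] by auto
  have ne: "(\<lambda>p. p \<bullet> x) ` orbit G z \<noteq> {}" using orbit_self[OF G] by auto
  obtain p where p: "p \<in> orbit G z" "maxfilt G z x = p \<bullet> x"
    using Max_in[OF fin(1) ne] maxfilt_alt[OF G] by auto
  have "p \<bullet> y \<le> maxfilt G z y"
    using Max_ge[OF fin(2)] p(1) maxfilt_alt[OF G] by auto
  moreover have "norm p = norm z"
    using p(1) fog_facts(3)[OF G] orth_norm by (auto simp: orbit_def)
  moreover have "p \<bullet> (x - y) \<le> norm p * norm (x - y)"
    by (rule norm_cauchy_schwarz)
  ultimately show ?thesis using p(2) by (simp add: inner_diff_right)
qed

lemma maxfilt_lip_abs:
  assumes G: "finite_orth_group G"
  shows "\<bar>maxfilt G z x - maxfilt G z y\<bar> \<le> norm z * norm (x - y)"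
  using maxfilt_lip[OF G, of z x y] maxfilt_lip[OF G, of z y x]
  by (simp add: norm_minus_commute abs_le_iff)

lemma bank_lip:
  assumes G: "finite_orth_group G"
  shows "norm (maxfilter_bank G z x - maxfilter_bank G z y) \<le> (\<Sum>i\<in>UNIV. norm (z i)) * norm (x - y)"
proof -
  have "norm (maxfilter_bank G z x - maxfilter_bank G z y)
     \<le> (\<Sum>i\<in>UNIV. \<bar>(maxfilter_bank G z x - maxfilter_bank G z y) $ i\<bar>)"
    by (rule norm_le_l1_cart)
  also have "\<dots> \<le> (\<Sum>i\<in>UNIV. norm (z i) * norm (x - y))"
    by (rule sum_mono) (simp add: maxfilter_bank_def maxfilt_lip_abs[OF G])
  finally show ?thesis by (simp add: sum_distrib_right)
qed

lemma bank_cont: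
  assumes G: "finite_orth_group G"
  shows "continuous_on S (maxfilter_bank G z)"
proof (rule lipschitz_on_continuous_on)
  show "(\<Sum>i\<in>UNIV. norm (z i))-lipschitz_on S (maxfilter_bank G z)"
    by (rule lipschitz_onI) (auto simp: dist_norm bank_lip[OF G] sum_nonneg)
qed

lemma voronoi_open:
  assumes G: "finite_orth_group G"
  shows "open (voronoi G w)"
proof -
  have "voronoi G w = (\<Inter>p\<in>orbit G w - {w}. {y. p \<bullet> y < w \<bullet> y})"
    unfolding voronoi_def by auto
  moreover have "open (\<Inter>p\<in>orbit G w - {w}. {y. p \<bullet> y < w \<bullet> y})"
    by (rule open_INT) (auto simp: orbit_finite[OF G] intro!: open_Collect_less continuous_intros)
  ultimately show ?thesis by simp
qed

lemma voronoi_maxfilt: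
  assumes G: "finite_orth_group G" and g: "g \<in> G" and y: "y \<in> voronoi G (g *v z)"
  shows "maxfilt G z y = (g *v z) \<bullet> y"
proof -
  have o: "orbit G (g *v z) = orbit G z" by (rule orbit_mult[OF G g])
  have fin: "finite ((\<lambda>p. p \<bullet> y) ` orbit G z)" using orbit_finite[OF G] by auto
  have gz: "g *v z \<in> orbit G z" using g by (auto simp: orbit_def)
  show ?thesis unfolding maxfilt_alt[OF G]
  proof (rule antisym)
    show "Max ((\<lambda>p. p \<bullet> y) ` orbit G z) \<le> (g *v z) \<bullet> y"
      using fin gz y o unfolding voronoi_def
      by (subst Max_le_iff) (auto intro: less_imp_le)
    show "(g *v z) \<bullet> y \<le> Max ((\<lambda>p. p \<bullet> y) ` orbit G z)"
      using fin gz by (auto intro: Max_ge)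
  qed
qed

definition psi :: "('n::finite \<Rightarrow> real^'d) \<Rightarrow> real^'d \<Rightarrow> real^'n" where
  "psi c h = (\<chi> i. c i \<bullet> h)"

lemma psi_dual: "(col_matrix c *v v) \<bullet> h = v \<bullet> psi c h"
proof -
  have "(col_matrix c *v v) \<bullet> h = (\<Sum>r\<in>UNIV. \<Sum>j\<in>UNIV. c j $ r * v $ j * h $ r)"
    unfolding col_matrix_def inner_vec_def matrix_vector_mult_def
    by (simp add: sum_distrib_right)
  also have "\<dots> = (\<Sum>j\<in>UNIV. \<Sum>r\<in>UNIV. c j $ r * v $ j * h $ r)"
    by (rule sum.swap)
  also have "\<dots> = v \<bullet> psi c h"
    unfolding psi_def inner_vec_def
    by (simp add: sum_distrib_left mult_ac)
  finally show ?thesis .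
qed

lemma psi_add: "psi c (a + b) = psi c a + psi c b"
  by (simp add: psi_def vec_eq_iff inner_add_right)

lemma psi_scale: "psi c (t *\<^sub>R a) = t *\<^sub>R psi c a"
  by (simp add: psi_def vec_eq_iff)

lemma psi_diff: "psi c (a - b) = psi c a - psi c b"
  by (simp add: psi_def vec_eq_iff inner_diff_right)

lemma psi_bound: "norm (psi c h) \<le> onorm (\<lambda>v. col_matrix c *v v) * norm h"
proof -
  let ?L = "onorm (\<lambda>v. col_matrix c *v v)"
  have bl: "bounded_linear (\<lambda>v. col_matrix c *v v)" by simp
  have "norm (psi c h) ^ 2 = psi c h \<bullet> psi c h" by (simp add: power2_norm_eq_inner)
  also have "\<dots> = (col_matrix c *v psi c h) \<bullet> h" by (simp add: psi_dual)
  also have "\<dots> \<le> norm (col_matrix c *v psi c h) * norm h" by (rule norm_cauchy_schwarz)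
  also have "\<dots> \<le> ?L * norm (psi c h) * norm h"
    by (rule mult_right_mono[OF onorm[OF bl]]) simp
  finally have *: "norm (psi c h) * norm (psi c h) \<le> (?L * norm h) * norm (psi c h)"
    by (simp add: power2_eq_square mult_ac)
  show ?thesis
  proof (cases "norm (psi c h) = 0")
    case True then show ?thesis using onorm_pos_le[OF bl] by simp
  next
    case False
    then have "norm (psi c h) > 0" by simp
    with * show ?thesis by (simp add: mult_le_cancel_right)
  qed
qed

lemma onorm_by_psi:
  assumes "0 \<le> b" "\<And>h. norm (psi c h) \<le> b * norm h"
  shows "onorm (\<lambda>v. col_matrix c *v v) \<le> b"
proof (rule onorm_bound[OF assms(1)])
  fix v
  let ?w = "col_matrix c *v v"
  have "norm ?w ^ 2 = ?w \<bullet> ?w" by (simp add: power2_norm_eq_inner)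
  also have "\<dots> = v \<bullet> psi c ?w" by (simp add: psi_dual)
  also have "\<dots> \<le> norm v * norm (psi c ?w)" by (rule norm_cauchy_schwarz)
  also have "\<dots> \<le> norm v * (b * norm ?w)" by (rule mult_left_mono[OF assms(2)]) simp
  finally have *: "norm ?w * norm ?w \<le> (b * norm v) * norm ?w"
    by (simp add: power2_eq_square mult_ac)
  show "norm ?w \<le> b * norm v"
  proof (cases "norm ?w = 0")
    case True then show ?thesis using assms(1) by simp
  next
    case False
    then have "norm ?w > 0" by simp
    with * show ?thesis by (simp add: mult_le_cancel_right)
  qed
qed

definition compat :: "(real^'d^'d) set \<Rightarrow> ('n::finite \<Rightarrow> real^'d) \<Rightarrow> ('n \<Rightarrow> real^'d^'d) \<Rightarrow> bool" where
  "compat G z g \<longleftrightarrow> (\<forall>i. g i \<in> G) \<and> (\<Inter>i. voronoi G (g i *v z i)) \<noteq> {}"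

definition LS :: "(real^'d^'d) set \<Rightarrow> ('n::finite \<Rightarrow> real^'d) \<Rightarrow> real set" where
  "LS G z = {onorm (\<lambda>v. col_matrix (\<lambda>i. g i *v z i) *v v) | g. (\<forall>i. g i \<in> G) \<and> (\<Inter>i. voronoi G (g i *v z i)) \<noteq> {}}"

definition Hs :: "(real^'d^'d) set \<Rightarrow> ('n::finite \<Rightarrow> real^'d) \<Rightarrow> (real^'d) set" where
  "Hs G z = (\<Union>i. \<Union>p\<in>orbit G (z i). \<Union>q\<in>orbit G (z i) - {p}. {x. (p - q) \<bullet> x = 0})"

lemma Hs_neg:
  fixes z :: "'n::finite \<Rightarrow> real^'d"
  assumes G: "finite_orth_group G"
  shows "negligible (Hs G z)"
  unfolding Hs_def
proof (rule negligible_Union)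
  show "finite (range (\<lambda>i. \<Union>p\<in>orbit G (z i). \<Union>q\<in>orbit G (z i) - {p}. {x. (p - q) \<bullet> x = 0}))"
    by simp
next
  fix T assume "T \<in> range (\<lambda>i. \<Union>p\<in>orbit G (z i). \<Union>q\<in>orbit G (z i) - {p}. {x. (p - q) \<bullet> x = 0})"
  then obtain i where T: "T = (\<Union>p\<in>orbit G (z i). \<Union>q\<in>orbit G (z i) - {p}. {x. (p - q) \<bullet> x = 0})" by auto
  have "negligible (\<Union>p\<in>orbit G (z i). \<Union>q\<in>orbit G (z i) - {p}. {x. (p - q) \<bullet> x = 0})"
  proof (intro negligible_Union finite_imageI orbit_finite[OF G] finite_Diff, clarify)
    fix p assume "p \<in> orbit G (z i)"
    show "negligible (\<Union>q\<in>orbit G (z i) - {p}. {x. (p - q) \<bullet> x = 0})"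
      by (intro negligible_Union finite_imageI orbit_finite[OF G] finite_Diff)
         (auto intro!: negligible_hyperplane)
  qed
  then show "negligible T" using T by simp
qed

lemma Hs_dense:
  fixes z :: "'n::finite \<Rightarrow> real^'d"
  assumes G: "finite_orth_group G" and "e > 0"
  shows "\<exists>x'. x' \<in> ball x e \<and> x' \<notin> Hs G z"
proof (rule ccontr)
  assume "\<not> ?thesis"
  then have "ball x e \<subseteq> Hs G z" by auto
  then have "negligible (ball x e)" using Hs_neg[OF G] negligible_subset by blast
  moreover have "\<not> negligible (ball x e)" using assms(2) by (intro open_not_negligible) auto
  ultimately show False by blast
qed

lemma region_open:
  fixes z :: "'n::finite \<Rightarrow> real^'d"
  assumes G: "finite_orth_group G"
  shows "open (\<Inter>i. voronoi G (g i *v z i))"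
  by (rule open_INT) (auto intro: voronoi_open[OF G])

lemma region_bank:
  fixes z :: "'n::finite \<Rightarrow> real^'d"
  assumes G: "finite_orth_group G" and g: "\<forall>i. g i \<in> G" and x: "x \<in> (\<Inter>i. voronoi G (g i *v z i))"
  shows "maxfilter_bank G z x = psi (\<lambda>i. g i *v z i) x"
  using voronoi_maxfilt[OF G] g x by (auto simp: maxfilter_bank_def psi_def vec_eq_iff)

lemma off_Hs:
  fixes z :: "'n::finite \<Rightarrow> real^'d"
  assumes G: "finite_orth_group G" and x: "x \<notin> Hs G z"
  shows "\<exists>g. (\<forall>i. g i \<in> G) \<and> x \<in> (\<Inter>i. voronoi G (g i *v z i))"
proof -
  have "\<forall>i. \<exists>h. h \<in> G \<and> x \<in> voronoi G (h *v z i)"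
  proof
    fix i
    let ?S = "orbit G (z i)"
    have fin: "finite ((\<lambda>p. p \<bullet> x) ` ?S)" using orbit_finite[OF G] by auto
    have ne: "(\<lambda>p. p \<bullet> x) ` ?S \<noteq> {}" using orbit_self[OF G] by auto
    obtain p where p: "p \<in> ?S" "p \<bullet> x = Max ((\<lambda>p. p \<bullet> x) ` ?S)"
      using Max_in[OF fin ne] by auto
    obtain h where h: "h \<in> G" "p = h *v z i" using p(1) by (auto simp: orbit_def)
    have "x \<in> voronoi G p"
      unfolding voronoi_def
    proof (intro CollectI ballI impI)
      fix q assume q: "q \<in> orbit G p" "q \<noteq> p"
      then have qS: "q \<in> ?S" using orbit_mult[OF G h(1)] h by simp
      have "q \<bullet> x \<le> p \<bullet> x" using p(2) fin qS by (auto intro: Max_ge)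
      moreover have "(p - q) \<bullet> x \<noteq> 0"
        using x p(1) qS q(2) unfolding Hs_def by blast
      ultimately show "q \<bullet> x < p \<bullet> x" by (auto simp: inner_diff_left)
    qed
    then show "\<exists>h. h \<in> G \<and> x \<in> voronoi G (h *v z i)" using h by blast
  qed
  then obtain g where "\<forall>i. g i \<in> G \<and> x \<in> voronoi G (g i *v z i)" by metis
  then show ?thesis by blast
qed

lemma LS_finite:
  fixes z :: "'n::finite \<Rightarrow> real^'d"
  assumes G: "finite_orth_group G"
  shows "finite (LS G z)"
proof -
  have "LS G z \<subseteq> (\<lambda>g. onorm (\<lambda>v. col_matrix (\<lambda>i. g i *v z i) *v v)) ` (PiE UNIV (\<lambda>_. G))"
    unfolding LS_def by (auto simp: PiE_def extensional_def)
  moreover have "finite (PiE UNIV (\<lambda>_::'n. G))"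
    using fog_facts(1)[OF G] by (intro finite_PiE) auto
  ultimately show ?thesis by (meson finite_imageI finite_subset)
qed

lemma LS_ne:
  fixes z :: "'n::finite \<Rightarrow> real^'d"
  assumes G: "finite_orth_group G"
  shows "LS G z \<noteq> {}"
proof -
  obtain x where "x \<notin> Hs G z" using Hs_dense[OF G, of 1 0 z] by auto
  then obtain g where "\<forall>i. g i \<in> G" "x \<in> (\<Inter>i. voronoi G (g i *v z i))" using off_Hs[OF G] by blast
  then show ?thesis unfolding LS_def by blast
qed

lemma LS_nonneg: "l \<in> LS G z \<Longrightarrow> 0 \<le> l"
  unfolding LS_def by (auto intro!: onorm_pos_le)

lemma LS_Max_nonneg:
  fixes z :: "'n::finite \<Rightarrow> real^'d"
  assumes G: "finite_orth_group G"
  shows "0 \<le> Max (LS G z)"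
  using LS_nonneg Max_in[OF LS_finite[OF G] LS_ne[OF G]] by blast

lemma lip_generic:
  fixes z :: "'n::finite \<Rightarrow> real^'d"
  assumes G: "finite_orth_group G" and x: "x \<notin> Hs G z" and y: "y \<notin> Hs G z"
  shows "norm (maxfilter_bank G z y - maxfilter_bank G z x) \<le> Max (LS G z) * norm (y - x)"
proof -
  define \<gamma> where "\<gamma> = (\<lambda>t::real. x + t *\<^sub>R (y - x))"
  define \<Phi> where "\<Phi> = maxfilter_bank G z"
  define f where "f = (\<lambda>t. \<Phi> (\<gamma> t))"
  define gs where "gs = (\<lambda>t. SOME g. (\<forall>i. g i \<in> G) \<and> \<gamma> t \<in> (\<Inter>i. voronoi G (g i *v z i)))"
  define f' where "f' = (\<lambda>t. psi (\<lambda>i. gs t i *v z i) (y - x))"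
  define T where "T = {t. \<gamma> t \<in> Hs G z}"
  let ?L = "Max (LS G z)"
  have gs: "(\<forall>i. gs t i \<in> G) \<and> \<gamma> t \<in> (\<Inter>i. voronoi G (gs t i *v z i))" if "t \<notin> T" for t
  proof -
    have "\<exists>g. (\<forall>i. g i \<in> G) \<and> \<gamma> t \<in> (\<Inter>i. voronoi G (g i *v z i))"
      using off_Hs[OF G, of "\<gamma> t" z] that by (simp add: T_def)
    then show ?thesis unfolding gs_def by (rule someI_ex)
  qed
  have finT: "finite T"
  proof -
    have "T \<subseteq> (\<Union>i. \<Union>p\<in>orbit G (z i). \<Union>q\<in>orbit G (z i) - {p}. {- ((p - q) \<bullet> x) / ((p - q) \<bullet> (y - x))})"
    proof
      fix t assume "t \<in> T"
      then obtain i p q where pq: "p \<in> orbit G (z i)" "q \<in> orbit G (z i) - {p}" "(p - q) \<bullet> \<gamma> t = 0"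
        unfolding T_def Hs_def by blast
      have nz: "(p - q) \<bullet> x \<noteq> 0" using x pq(1,2) unfolding Hs_def by blast
      have eq: "(p - q) \<bullet> x + t * ((p - q) \<bullet> (y - x)) = 0"
        using pq(3) by (simp add: \<gamma>_def inner_add_right)
      then have nz2: "(p - q) \<bullet> (y - x) \<noteq> 0" using nz by auto
      then have "t = - ((p - q) \<bullet> x) / ((p - q) \<bullet> (y - x))" using eq by (simp add: field_simps)
      then show "t \<in> (\<Union>i. \<Union>p\<in>orbit G (z i). \<Union>q\<in>orbit G (z i) - {p}. {- ((p - q) \<bullet> x) / ((p - q) \<bullet> (y - x))})"
        using pq by blast
    qed
    moreover have "finite (\<Union>i. \<Union>p\<in>orbit G (z i). \<Union>q\<in>orbit G (z i) - {p}. {- ((p - q) \<bullet> x) / ((p - q) \<bullet> (y - x))})"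
      using orbit_finite[OF G] by auto
    ultimately show ?thesis by (rule finite_subset)
  qed
  have cont: "continuous_on {0..1} f"
    unfolding f_def \<Phi>_def \<gamma>_def
    by (intro continuous_on_compose2[OF bank_cont[OF G, of UNIV]] continuous_intros) auto
  have deriv: "(f has_vector_derivative f' t) (at t)" if t: "t \<in> {0<..<1} - T" for t
  proof -
    let ?c = "\<lambda>i. gs t i *v z i"
    let ?R = "\<Inter>i. voronoi G (gs t i *v z i)"
    have g: "\<forall>i. gs t i \<in> G" "\<gamma> t \<in> ?R" using gs t by auto
    have U: "open (\<gamma> -` ?R)"
      by (rule continuous_open_vimage[OF region_open[OF G]]) (auto simp: \<gamma>_def intro!: continuous_intros)
    have "((\<lambda>s. psi ?c x + s *\<^sub>R psi ?c (y - x)) has_vector_derivative psi ?c (y - x)) (at t)"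
      by (auto intro!: derivative_eq_intros)
    then have "(f has_vector_derivative psi ?c (y - x)) (at t)"
    proof (rule has_vector_derivative_transform_within_open[OF _ U])
      show "t \<in> \<gamma> -` ?R" using g by simp
      fix s assume "s \<in> \<gamma> -` ?R"
      then show "psi ?c x + s *\<^sub>R psi ?c (y - x) = f s"
        using region_bank[OF G g(1)] by (simp add: f_def \<Phi>_def \<gamma>_def psi_add psi_scale)
    qed
    then show ?thesis by (simp add: f'_def)
  qed
  have int: "(f' has_integral (f 1 - f 0)) {0..1}"
    by (rule fundamental_theorem_of_calculus_interior_strong[OF finT _ deriv cont]) auto
  have bound: "norm (f' t) \<le> ?L * norm (y - x)" if "t \<in> cbox 0 1 - T" for t
  proof -
    have g: "\<forall>i. gs t i \<in> G" "\<gamma> t \<in> (\<Inter>i. voronoi G (gs t i *v z i))" using gs that by auto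
    have "onorm (\<lambda>v. col_matrix (\<lambda>i. gs t i *v z i) *v v) \<in> LS G z"
      unfolding LS_def using g by blast
    then have "onorm (\<lambda>v. col_matrix (\<lambda>i. gs t i *v z i) *v v) \<le> ?L"
      by (rule Max_ge[OF LS_finite[OF G]])
    then show ?thesis
      unfolding f'_def by (rule order_trans[OF psi_bound mult_right_mono]) simp_all
  qed
  have L0: "0 \<le> ?L * norm (y - x)" by (intro mult_nonneg_nonneg LS_Max_nonneg[OF G] norm_ge_zero)
  have int': "(f' has_integral (f 1 - f 0)) (cbox 0 1)" using int by simp
  have "norm (f 1 - f 0) \<le> ?L * norm (y - x) * 1"
    using has_integral_bound_spike_finite[OF L0 finT int' bound] by simp
  then show ?thesis by (simp add: f_def \<Phi>_def \<gamma>_def)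
qed

lemma tri3:
  fixes a b c d :: "'a::real_normed_vector"
  shows "norm (a - d) \<le> norm (a - b) + norm (b - c) + norm (c - d)"
proof -
  have "a - d = (a - b) + (b - c) + (c - d)" by simp
  then have "norm (a - d) \<le> norm ((a - b) + (b - c)) + norm (c - d)"
    by (metis norm_triangle_ineq)
  also have "norm ((a - b) + (b - c)) \<le> norm (a - b) + norm (b - c)" by (rule norm_triangle_ineq)
  finally show ?thesis by simp
qed

lemma eps_le:
  fixes A B K :: real
  assumes "\<And>e. e > 0 \<Longrightarrow> A \<le> B + K * e" "0 \<le> K"
  shows "A \<le> B"
proof (rule field_le_epsilon)
  fix e :: real assume e: "e > 0"
  have "A \<le> B + K * (e / (K + 1))" using assms(2) e by (intro assms(1)) simp
  also have "K * (e / (K + 1)) \<le> e"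
    using assms(2) e by (simp add: field_simps)
  finally show "A \<le> B + e" by simp
qed

lemma lip_all:
  fixes z :: "'n::finite \<Rightarrow> real^'d"
  assumes G: "finite_orth_group G"
  shows "norm (maxfilter_bank G z y - maxfilter_bank G z x) \<le> Max (LS G z) * norm (y - x)"
proof -
  let ?\<Phi> = "maxfilter_bank G z"
  let ?L = "Max (LS G z)"
  let ?C = "\<Sum>i\<in>UNIV. norm (z i)"
  have L0: "0 \<le> ?L" by (rule LS_Max_nonneg[OF G])
  have C0: "0 \<le> ?C" by (simp add: sum_nonneg)
  show ?thesis
  proof (rule eps_le[where K = "2 * ?C + 2 * ?L"])
    fix e :: real assume e: "e > 0"
    obtain x' where x': "x' \<in> ball x e" "x' \<notin> Hs G z" using Hs_dense[OF G e] by blast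
    obtain y' where y': "y' \<in> ball y e" "y' \<notin> Hs G z" using Hs_dense[OF G e] by blast
    have dx: "norm (x' - x) < e" using x' by (simp add: dist_norm norm_minus_commute)
    have dy: "norm (y - y') < e" using y' by (simp add: dist_norm)
    have "norm (?\<Phi> y - ?\<Phi> x) \<le> norm (?\<Phi> y - ?\<Phi> y') + norm (?\<Phi> y' - ?\<Phi> x') + norm (?\<Phi> x' - ?\<Phi> x)"
      by (rule tri3)
    also have "\<dots> \<le> ?C * norm (y - y') + ?L * norm (y' - x') + ?C * norm (x' - x)"
      using bank_lip[OF G] lip_generic[OF G x'(2) y'(2)] by (intro add_mono) auto
    also have "?L * norm (y' - x') \<le> ?L * (norm (y - x) + 2 * e)"
    proof (rule mult_left_mono[OF _ L0])
      have "norm (y' - x') \<le> norm (y' - y) + norm (y - x) + norm (x - x')" by (rule tri3)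
      then have "norm (y' - x') \<le> norm (y - x) + norm (y - y') + norm (x' - x)"
        by (simp add: norm_minus_commute)
      then show "norm (y' - x') \<le> norm (y - x) + 2 * e" using dx dy by simp
    qed
    also have "?C * norm (y - y') \<le> ?C * e" using dy C0 by (intro mult_left_mono) auto
    also have "?C * norm (x' - x) \<le> ?C * e" using dx C0 by (intro mult_left_mono) auto
    finally show "norm (?\<Phi> y - ?\<Phi> x) \<le> ?L * norm (y - x) + (2 * ?C + 2 * ?L) * e"
      by (simp add: algebra_simps)
  qed (use L0 C0 in simp)
qed

lemma bank_orbit:
  assumes G: "finite_orth_group G" and k: "k \<in> G"
  shows "maxfilter_bank G z (k *v x) = maxfilter_bank G z x"
  by (simp add: maxfilter_bank_def maxfilt_def orbit_mult[OF G k])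

lemma qdist_set:
  "{dist p q | p q. p \<in> orbit G x \<and> q \<in> orbit G y} = (\<lambda>(p, q). dist p q) ` (orbit G x \<times> orbit G y)"
  by auto

lemma qdist_finite:
  assumes G: "finite_orth_group G"
  shows "finite {dist p q | p q. p \<in> orbit G x \<and> q \<in> orbit G y}"
  unfolding qdist_set using orbit_finite[OF G] by auto

lemma qdist_nonneg:
  assumes G: "finite_orth_group G"
  shows "0 \<le> qdist G x y"
proof -
  have ne: "{dist p q | p q. p \<in> orbit G x \<and> q \<in> orbit G y} \<noteq> {}" using orbit_self[OF G] by blast
  show ?thesis unfolding qdist_def using qdist_finite[OF G] ne by (subst Min_ge_iff) auto
qed

lemma ratio_le:
  fixes z :: "'n::finite \<Rightarrow> real^'d"
  assumes G: "finite_orth_group G"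
  shows "norm (maxfilter_bank G z x - maxfilter_bank G z y) / qdist G x y \<le> Max (LS G z)"
proof -
  let ?Q = "{dist p q | p q. p \<in> orbit G x \<and> q \<in> orbit G y}"
  have ne: "?Q \<noteq> {}" using orbit_self[OF G] by blast
  obtain p q where pq: "p \<in> orbit G x" "q \<in> orbit G y" "qdist G x y = dist p q"
    using Min_in[OF qdist_finite[OF G] ne] unfolding qdist_def by auto
  obtain a b where ab: "a \<in> G" "b \<in> G" "p = a *v x" "q = b *v y" using pq by (auto simp: orbit_def)
  have "norm (maxfilter_bank G z x - maxfilter_bank G z y) = norm (maxfilter_bank G z p - maxfilter_bank G z q)"
    using ab bank_orbit[OF G ab(1), of z x] bank_orbit[OF G ab(2), of z y] by simp
  also have "\<dots> \<le> Max (LS G z) * qdist G x y"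
    using lip_all[OF G, of z p q] pq(3) by (simp add: dist_norm)
  finally have *: "norm (maxfilter_bank G z x - maxfilter_bank G z y) \<le> Max (LS G z) * qdist G x y" .
  show ?thesis
  proof (cases "qdist G x y = 0")
    case True then show ?thesis using LS_Max_nonneg[OF G, of z] by simp
  next
    case False
    then have "qdist G x y > 0" using pq(3) by simp
    then show ?thesis using * by (simp add: divide_le_eq)
  qed
qed

lemma fix_neg:
  fixes k :: "real^'d^'d"
  assumes "k \<noteq> mat 1"
  shows "negligible {x. k *v x = x}"
proof -
  obtain r where r: "k $ r \<noteq> (mat 1 :: real^'d^'d) $ r" using assms by (auto simp: vec_eq_iff)
  have comp: "(A *v x) $ r = A $ r \<bullet> x" for A :: "real^'d^'d" and x
    by (simp add: matrix_vector_mult_def inner_vec_def mult.commute)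
  have "{x. k *v x = x} \<subseteq> {x. (k $ r - (mat 1 :: real^'d^'d) $ r) \<bullet> x = 0}"
  proof clarify
    fix x :: "real^'d" assume "k *v x = x"
    then have "(k *v x) $ r = ((mat 1 :: real^'d^'d) *v x) $ r" by simp
    then show "(k $ r - (mat 1 :: real^'d^'d) $ r) \<bullet> x = 0" by (simp only: comp inner_diff_left)
  qed
  moreover have "negligible {x. (k $ r - (mat 1 :: real^'d^'d) $ r) \<bullet> x = 0}"
    using r by (intro negligible_hyperplane) simp
  ultimately show ?thesis by (rule negligible_subset[rotated])
qed

lemma exists_pos_lb:
  fixes f :: "'a \<Rightarrow> real"
  assumes "finite A" "\<And>a. a \<in> A \<Longrightarrow> 0 < f a"
  shows "\<exists>\<delta>>0. \<forall>a\<in>A. \<delta> \<le> f a"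
proof -
  let ?m = "Min (insert 1 (f ` A))"
  have "?m > 0" using assms by (subst Min_gr_iff) auto
  moreover have "\<forall>a\<in>A. ?m \<le> f a" using assms by (auto intro: Min_le)
  ultimately show ?thesis by blast
qed

lemma lower:
  fixes z :: "'n::finite \<Rightarrow> real^'d"
  assumes G: "finite_orth_group G" and b: "0 \<le> b" "b < Max (LS G z)"
  shows "\<exists>x y. orbit G x \<noteq> orbit G y \<and> b < norm (maxfilter_bank G z x - maxfilter_bank G z y) / qdist G x y"
proof -
  obtain g where g: "\<forall>i. g i \<in> G" "(\<Inter>i. voronoi G (g i *v z i)) \<noteq> {}"
    and Lg: "Max (LS G z) = onorm (\<lambda>v. col_matrix (\<lambda>i. g i *v z i) *v v)"
    using Max_in[OF LS_finite[OF G] LS_ne[OF G], of z] unfolding LS_def by auto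
  define c where "c = (\<lambda>i. g i *v z i)"
  define R where "R = (\<Inter>i. voronoi G (g i *v z i))"
  have Ropen: "open R" unfolding R_def by (rule region_open[OF G])
  obtain v where v: "b * norm v < norm (psi c v)"
  proof (rule ccontr)
    assume "\<not> thesis"
    then have "\<And>v. norm (psi c v) \<le> b * norm v" using that by (meson not_less)
    then have "onorm (\<lambda>v. col_matrix c *v v) \<le> b" by (rule onorm_by_psi[OF b(1)])
    then show False using b(2) Lg c_def by simp
  qed
  have v0: "v \<noteq> 0"
  proof
    assume "v = 0"
    moreover have "psi c 0 = 0" by (simp add: psi_def vec_eq_iff)
    ultimately show False using v by simp
  qed
  obtain x1 where x1: "x1 \<in> R" using g(2) R_def by auto
  obtain r where r: "r > 0" "ball x1 r \<subseteq> R" using Ropen x1 open_contains_ball by blast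
  define F where "F = (\<Union>k\<in>G - {mat 1}. {x. k *v x = x})"
  have Fneg: "negligible F" unfolding F_def
    using fog_facts(1)[OF G] by (intro negligible_Union finite_imageI finite_Diff) (auto intro!: fix_neg)
  obtain x0 where x0: "x0 \<in> ball x1 r" "x0 \<notin> F"
  proof (rule ccontr)
    assume "\<not> thesis"
    then have "ball x1 r \<subseteq> F" using that by blast
    then have "negligible (ball x1 r)" using Fneg negligible_subset by blast
    moreover have "\<not> negligible (ball x1 r)" using r by (intro open_not_negligible) auto
    ultimately show False by blast
  qed
  have x0R: "x0 \<in> R" using x0 r by blast
  obtain r0 where r0: "r0 > 0" "ball x0 r0 \<subseteq> R" using Ropen x0R open_contains_ball by blast
  obtain \<delta> where \<delta>: "\<delta> > 0" "\<forall>k\<in>G - {mat 1}. \<delta> \<le> dist (k *v x0) x0"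
  proof -
    have "\<exists>\<delta>>0. \<forall>k\<in>G - {mat 1}. \<delta> \<le> dist (k *v x0) x0"
    proof (rule exists_pos_lb)
      show "finite (G - {mat 1})" using fog_facts(1)[OF G] by simp
      fix k assume "k \<in> G - {mat 1}"
      then have "k *v x0 \<noteq> x0" using x0(2) unfolding F_def by blast
      then show "0 < dist (k *v x0) x0" by simp
    qed
    then show ?thesis using that by blast
  qed
  define \<epsilon> where "\<epsilon> = min (r0 / 2) (\<delta> / 4)"
  have \<epsilon>: "\<epsilon> > 0" "\<epsilon> < r0" "2 * \<epsilon> < \<delta>" using r0 \<delta> by (auto simp: \<epsilon>_def)
  define s where "s = \<epsilon> / norm v"
  have s: "s > 0" "s * norm v = \<epsilon>" using v0 \<epsilon> by (auto simp: s_def)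
  define y where "y = x0 + s *\<^sub>R v"
  have dxy: "dist x0 y = \<epsilon>" using s by (simp add: y_def dist_norm)
  have yR: "y \<in> R" using r0 dxy \<epsilon> by auto
  have far: "\<epsilon> < dist p y" if pp: "p \<in> orbit G x0" "p \<noteq> x0" for p
  proof -
    obtain k where k: "k \<in> G" "p = k *v x0" using pp(1) by (auto simp: orbit_def)
    have "k \<noteq> mat 1" using k pp(2) by auto
    then have "\<delta> \<le> dist p x0" using \<delta> k by auto
    moreover have "dist p x0 \<le> dist p y + dist x0 y" using dist_triangle[of p x0 y] by (simp add: dist_commute)
    ultimately show ?thesis using dxy \<epsilon> by linarith
  qed
  have neq: "orbit G x0 \<noteq> orbit G y"
  proof
    assume eq: "orbit G x0 = orbit G y"
    then have "y \<in> orbit G x0" using orbit_self[OF G] by auto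
    show False
    proof (cases "y = x0")
      case True then show False using dxy \<epsilon> by simp
    next
      case False
      then have "\<epsilon> < dist y y" using far[OF \<open>y \<in> orbit G x0\<close>] by blast
      then show False using \<epsilon> by simp
    qed
  qed
  have qd: "qdist G x0 y = \<epsilon>"
    unfolding qdist_def
  proof (rule Min_eqI[OF qdist_finite[OF G]])
    show "\<epsilon> \<in> {dist p q | p q. p \<in> orbit G x0 \<and> q \<in> orbit G y}"
      using dxy orbit_self[OF G, of x0] orbit_self[OF G, of y] by (intro CollectI exI[of _ x0] exI[of _ y]) simp
    fix d assume "d \<in> {dist p q | p q. p \<in> orbit G x0 \<and> q \<in> orbit G y}"
    then obtain p q where pq: "p \<in> orbit G x0" "q \<in> orbit G y" "d = dist p q" by blast
    obtain a where a: "a \<in> G" "q = a *v y" using pq(2) by (auto simp: orbit_def)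
    let ?ai = "matrix_inv a"
    have ai: "?ai \<in> G" "orthogonal_matrix ?ai" using fog_facts[OF G] a(1) by auto
    have "d = norm (?ai *v (p - q))" using pq(3) orth_norm[OF ai(2)] by (simp add: dist_norm)
    also have "?ai *v (p - q) = ?ai *v p - y"
      using a orth_inv[OF fog_facts(3)[OF G a(1)]]
      by (simp add: matrix_vector_mult_diff_distrib matrix_vector_mul_assoc)
    finally have d: "d = dist (?ai *v p) y" by (simp add: dist_norm)
    have p': "?ai *v p \<in> orbit G x0"
    proof -
      obtain k where k: "k \<in> G" "p = k *v x0" using pq(1) by (auto simp: orbit_def)
      then show ?thesis using fog_facts(4)[OF G ai(1) k(1)] by (auto simp: orbit_def matrix_vector_mul_assoc)
    qed
    show "\<epsilon> \<le> d"
    proof (cases "?ai *v p = x0")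
      case True then show ?thesis using d dxy by simp
    next
      case False then show ?thesis using far[OF p'] d by simp
    qed
  qed
  have lin: "maxfilter_bank G z y - maxfilter_bank G z x0 = s *\<^sub>R psi c v"
    using region_bank[OF G g(1)] x0R yR unfolding R_def c_def
    by (simp add: y_def psi_add psi_scale)
  have "norm (maxfilter_bank G z x0 - maxfilter_bank G z y) = norm (maxfilter_bank G z y - maxfilter_bank G z x0)"
    by (rule norm_minus_commute)
  also have "\<dots> = s * norm (psi c v)" using lin s by simp
  finally have "norm (maxfilter_bank G z x0 - maxfilter_bank G z y) / qdist G x0 y = s * norm (psi c v) / (s * norm v)"
    using qd s by simp
  also have "\<dots> = norm (psi c v) / norm v" using s(1) by simp
  finally have "norm (maxfilter_bank G z x0 - maxfilter_bank G z y) / qdist G x0 y = norm (psi c v) / norm v" .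
  moreover have "b < norm (psi c v) / norm v" using v v0 by (simp add: pos_less_divide_eq)
  ultimately have "b < norm (maxfilter_bank G z x0 - maxfilter_bank G z y) / qdist G x0 y" by simp
  then show ?thesis using neq by blast
qed

theorem theorem14:
  fixes G :: "(real^'d^'d) set" and z :: "'n::finite \<Rightarrow> real^'d"
  assumes "finite_orth_group G"
  shows "Sup {norm (maxfilter_bank G z x - maxfilter_bank G z y) / qdist G x y
              | x y. orbit G x \<noteq> orbit G y}
       = Max {onorm (\<lambda>v. col_matrix (\<lambda>i. g i *v z i) *v v)
              | g. (\<forall>i. g i \<in> G) \<and> (\<Inter>i. voronoi G (g i *v z i)) \<noteq> {}}"
proof -
  note G = assms
  let ?S = "{norm (maxfilter_bank G z x - maxfilter_bank G z y) / qdist G x y | x y. orbit G x \<noteq> orbit G y}"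
  let ?L = "Max (LS G z)"
  have ne: "?S \<noteq> {}"
  proof -
    have o0: "orbit G 0 = {0}" using orbit_self[OF G, of 0] by (auto simp: orbit_def)
    have "(1::real^'d) \<in> orbit G 1" by (rule orbit_self[OF G])
    moreover have "(1::real^'d) \<noteq> 0" by (simp add: vec_eq_iff)
    ultimately have "orbit G 0 \<noteq> orbit G (1::real^'d)"
      using o0 by (metis singletonD)
    then show ?thesis by blast
  qed
  have "Sup ?S = ?L"
  proof (rule cSup_eq_non_empty[OF ne])
    fix s assume "s \<in> ?S"
    then show "s \<le> ?L" using ratio_le[OF G] by auto
  next
    fix u assume u: "\<And>s. s \<in> ?S \<Longrightarrow> s \<le> u"
    show "?L \<le> u"
    proof (rule ccontr)
      assume "\<not> ?L \<le> u"
      then have lt: "u < ?L" by simp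
      show False
      proof (cases "u < 0")
        case True
        obtain s where "s \<in> ?S" using ne by blast
        moreover then have "0 \<le> s" using qdist_nonneg[OF G] by auto
        ultimately show False using u True by fastforce
      next
        case False
        then obtain x y where "orbit G x \<noteq> orbit G y"
          "u < norm (maxfilter_bank G z x - maxfilter_bank G z y) / qdist G x y"
          using lower[OF G _ lt] by auto
        then show False using u by fastforce
      qed
    qed
  qed
  then show ?thesis unfolding LS_def by simp
qed

end
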